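(* Let $n$ be a natural number and $T=(t_{ij})\in M_n(\mathbb{C})$. Then (i) $$\sup\{|\mathrm{tr}((R\circ C)T)|:R,C\in M_n(\mathbb{C}),\ \|R\|_r\le1,\ \|C\|_c\le1\}=\sup\Big\{\sum_{i=1}^n\Big(\sum_{j=1}^n|t_{ji}|^2b_{ij}\Big)^{1/2}: b_{ij}\ge0,\ \sum_{i=1}^nb_{ij}\le1 \text{ for all } j\Big\};$$ (ii) $$\sup\{|\mathrm{tr}((R\circ C)T)|:R,C\in M_n(\mathbb{C}),\ \|R\|_r\le1,\ \|C\|_c\le1\}\le n\max\{|t_{ij}|:1\le i,j\le n\}.$$
   Context: $R\circ C$ denotes the entrywise (Schur) product $(r_{ij}c_{ij})$. For a scalar matrix, $\|R\|_r:=\max_i(\sum_j|r_{ij}|^2)^{1/2}$ and $\|C\|_c:=\max_j(\sum_i|c_{ij}|^2)^{1/2}$. *)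

theory Defs
  imports "HOL-Analysis.Analysis"
begin

text \<open>Square complex matrices of size n are represented as complex^'n^'n,
 with 'n a finite index type (CARD('n) = n).\<close>

definition schur :: "complex^'n^'m \<Rightarrow> complex^'n^'m \<Rightarrow> complex^'n^'m" where
  "schur R C = (\<chi> i j. R$i$j * C$i$j)"

definition mtrace :: "complex^'n^'n \<Rightarrow> complex" where
  "mtrace A = (\<Sum>i\<in>UNIV. A$i$i)"

definition row_norm :: "complex^'n^'m \<Rightarrow> real" where
  "row_norm R = Max ((\<lambda>i. sqrt (\<Sum>j\<in>UNIV. (cmod (R$i$j))^2)) ` UNIV)"

definition col_norm :: "complex^'n^'m \<Rightarrow> real" where
  "col_norm C = Max ((\<lambda>j. sqrt (\<Sum>i\<in>UNIV. (cmod (C$i$j))^2)) ` UNIV)"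

end

theory Submission imports Defs begin

lemma trace_eq: "mtrace (schur R C ** T) = (\<Sum>i\<in>UNIV. \<Sum>j\<in>UNIV. R$i$j * C$i$j * T$j$i)"
  by (simp add: mtrace_def schur_def matrix_matrix_mult_def)

lemma row_norm_le1: "row_norm (R::complex^'n^'m) \<le> 1 \<longleftrightarrow> (\<forall>i. (\<Sum>j\<in>UNIV. (cmod (R$i$j))^2) \<le> 1)"
  unfolding row_norm_def by (subst Max_le_iff) auto

lemma col_norm_le1: "col_norm (C::complex^'n^'m) \<le> 1 \<longleftrightarrow> (\<forall>j. (\<Sum>i\<in>UNIV. (cmod (C$i$j))^2) \<le> 1)"
  unfolding col_norm_def by (subst Max_le_iff) auto

definition fb :: "complex^'n^'n \<Rightarrow> real^'n^'n \<Rightarrow> real" where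
  "fb T b = (\<Sum>i\<in>UNIV. sqrt (\<Sum>j\<in>UNIV. (cmod (T$j$i))^2 * b$i$j))"

lemma lemA:
  fixes R C T :: "complex^'n^'n"
  assumes "row_norm R \<le> 1" "col_norm C \<le> 1"
  shows "cmod (mtrace (schur R C ** T)) \<le> fb T (\<chi> i j. (cmod (C$i$j))^2)"
proof -
  have r: "\<And>i. (\<Sum>j\<in>UNIV. (cmod (R$i$j))^2) \<le> 1" using assms(1) row_norm_le1 by blast
  have "cmod (mtrace (schur R C ** T)) \<le> (\<Sum>i\<in>UNIV. cmod (\<Sum>j\<in>UNIV. R$i$j * C$i$j * T$j$i))"
    unfolding trace_eq by (rule norm_sum)
  also have "\<dots> \<le> (\<Sum>i\<in>UNIV. \<Sum>j\<in>UNIV. \<bar>cmod (R$i$j)\<bar> * \<bar>cmod (C$i$j) * cmod (T$j$i)\<bar>)"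
    by (intro sum_mono order_trans[OF norm_sum]) (simp add: norm_mult)
  also have "\<dots> \<le> (\<Sum>i\<in>UNIV. L2_set (\<lambda>j. cmod (R$i$j)) UNIV * L2_set (\<lambda>j. cmod (C$i$j) * cmod (T$j$i)) UNIV)"
    by (intro sum_mono L2_set_mult_ineq)
  also have "\<dots> \<le> (\<Sum>i\<in>UNIV. L2_set (\<lambda>j. cmod (C$i$j) * cmod (T$j$i)) UNIV)"
  proof (intro sum_mono)
    fix i
    have "L2_set (\<lambda>j. cmod (R$i$j)) UNIV \<le> 1" unfolding L2_set_def using r[of i] by simp
    then show "L2_set (\<lambda>j. cmod (R$i$j)) UNIV * L2_set (\<lambda>j. cmod (C$i$j) * cmod (T$j$i)) UNIV
       \<le> L2_set (\<lambda>j. cmod (C$i$j) * cmod (T$j$i)) UNIV"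
      using L2_set_nonneg by (simp add: mult_left_le_one_le)
  qed
  also have "\<dots> = fb T (\<chi> i j. (cmod (C$i$j))^2)"
    unfolding fb_def L2_set_def by (simp add: power_mult_distrib mult.commute)
  finally show ?thesis .
qed

lemma lemC:
  fixes T :: "complex^'n^'n" and b :: "real^'n^'n"
  assumes b0: "\<forall>i j. b$i$j \<ge> 0" and bs: "\<forall>j. (\<Sum>i\<in>UNIV. b$i$j) \<le> 1"
  shows "fb T b \<le> real CARD('n) * Max ((\<lambda>(i,j). cmod (T$i$j)) ` UNIV)"
proof -
  define M where "M = Max ((\<lambda>(i,j). cmod (T$i$j)) ` UNIV)"
  have tM: "cmod (T$i$j) \<le> M" for i j unfolding M_def by (rule Max_ge) auto
  have M0: "0 \<le> M" using tM[of undefined undefined] norm_ge_zero order_trans by blast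
  have x0: "0 \<le> (\<Sum>j\<in>UNIV. b$i$j)" for i using b0 by (simp add: sum_nonneg)
  have "fb T b \<le> (\<Sum>i\<in>UNIV. sqrt (M^2 * (\<Sum>j\<in>UNIV. b$i$j)))"
    unfolding fb_def
  proof (intro sum_mono real_sqrt_le_mono)
    fix i
    show "(\<Sum>j\<in>UNIV. (cmod (T$j$i))^2 * b$i$j) \<le> M^2 * (\<Sum>j\<in>UNIV. b$i$j)"
      unfolding sum_distrib_left
      by (intro sum_mono mult_right_mono power_mono tM) (auto simp: b0)
  qed
  also have "\<dots> = M * (\<Sum>i\<in>UNIV. \<bar>1::real\<bar> * \<bar>sqrt (\<Sum>j\<in>UNIV. b$i$j)\<bar>)"
    using M0 x0 by (simp add: real_sqrt_mult sum_distrib_left[symmetric])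
  also have "\<dots> \<le> M * (L2_set (\<lambda>_::'n. 1) UNIV * L2_set (\<lambda>i. sqrt (\<Sum>j\<in>UNIV. b$i$j)) UNIV)"
    by (intro mult_left_mono M0) (rule L2_set_mult_ineq)
  also have "L2_set (\<lambda>i. sqrt (\<Sum>j\<in>UNIV. b$i$j)) UNIV = sqrt (\<Sum>i\<in>UNIV. \<Sum>j\<in>UNIV. b$i$j)"
    unfolding L2_set_def using x0 by simp
  also have "(\<Sum>i\<in>UNIV. \<Sum>j\<in>UNIV. b$i$j) = (\<Sum>j\<in>UNIV. \<Sum>i\<in>UNIV. b$i$j)"
    by (rule sum.swap)
  also have "\<dots> \<le> real CARD('n)"
    using sum_mono[of UNIV "\<lambda>j. \<Sum>i\<in>UNIV. b$i$j" "\<lambda>_. 1"] bs by simp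
  also have "L2_set (\<lambda>_. 1::real) (UNIV::'n set) = sqrt (real CARD('n))"
    unfolding L2_set_def by simp
  finally have "fb T b \<le> M * (sqrt (real CARD('n)) * sqrt (real CARD('n)))"
    using M0 by (simp add: mult_left_mono)
  then show ?thesis unfolding M_def by (simp add: mult.commute)
qed

lemma lemB:
  fixes T :: "complex^'n^'n" and b :: "real^'n^'n"
  assumes b0: "\<forall>i j. b$i$j \<ge> 0" and bs: "\<forall>j. (\<Sum>i\<in>UNIV. b$i$j) \<le> 1"
  shows "\<exists>R C. row_norm R \<le> 1 \<and> col_norm C \<le> 1 \<and> cmod (mtrace (schur R C ** T)) = fb T b"
proof -
  define s where "s i = sqrt (\<Sum>j\<in>UNIV. (cmod (T$j$i))^2 * b$i$j)" for i
  define C :: "complex^'n^'n" where "C = (\<chi> i j. complex_of_real (sqrt (b$i$j)))"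
  define R :: "complex^'n^'n" where
    "R = (\<chi> i j. if s i = 0 then 0 else cnj (T$j$i) * complex_of_real (sqrt (b$i$j) / s i))"
  have sn: "0 \<le> (\<Sum>j\<in>UNIV. (cmod (T$j$i))^2 * b$i$j)" for i
    using b0 by (intro sum_nonneg mult_nonneg_nonneg) auto
  have ss: "(s i)^2 = (\<Sum>j\<in>UNIV. (cmod (T$j$i))^2 * b$i$j)" for i
    unfolding s_def using sn[of i] by (rule real_sqrt_pow2)
  have s0: "s i \<ge> 0" for i unfolding s_def using sn[of i] by simp
  have "col_norm C \<le> 1" unfolding col_norm_le1 C_def using b0 bs by (simp add: norm_of_real)
  moreover have "row_norm R \<le> 1" unfolding row_norm_le1
  proof
    fix i
    show "(\<Sum>j\<in>UNIV. (cmod (R$i$j))^2) \<le> 1"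
    proof (cases "s i = 0")
      case True then show ?thesis by (simp add: R_def)
    next
      case False
      have "(\<Sum>j\<in>UNIV. (cmod (R$i$j))^2) = (\<Sum>j\<in>UNIV. (cmod (T$j$i))^2 * b$i$j) / (s i)^2"
        unfolding sum_divide_distrib
      proof (intro sum.cong refl)
        fix j
        have "cmod (R$i$j) = cmod (T$j$i) * sqrt (b$i$j) / s i"
          using False b0 s0[of i] by (simp add: R_def norm_mult norm_divide abs_of_nonneg)
        then show "(cmod (R$i$j))^2 = (cmod (T$j$i))^2 * b$i$j / (s i)^2"
          using b0 by (simp add: power_mult_distrib power_divide)
      qed
      also have "\<dots> = 1" using False ss[of i] by (metis divide_self power_not_zero)
      finally show ?thesis by simp
    qed
  qed
  moreover have "mtrace (schur R C ** T) = complex_of_real (fb T b)"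
  proof -
    have "mtrace (schur R C ** T) = (\<Sum>i\<in>UNIV. complex_of_real (s i))"
      unfolding trace_eq
    proof (intro sum.cong refl)
      fix i
      show "(\<Sum>j\<in>UNIV. R$i$j * C$i$j * T$j$i) = complex_of_real (s i)"
      proof (cases "s i = 0")
        case True then show ?thesis by (simp add: R_def)
      next
        case False
        have "(\<Sum>j\<in>UNIV. R$i$j * C$i$j * T$j$i)
            = (\<Sum>j\<in>UNIV. complex_of_real ((cmod (T$j$i))^2 * b$i$j / s i))"
        proof (intro sum.cong refl)
          fix j
          have e1: "sqrt (b$i$j) / s i * sqrt (b$i$j) = b$i$j / s i" using b0 by simp
          have e2: "complex_of_real (sqrt (b$i$j) / s i) * complex_of_real (sqrt (b$i$j)) = complex_of_real (b$i$j / s i)"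
            by (simp only: of_real_mult[symmetric] e1)
          have "R$i$j * C$i$j * T$j$i = (T$j$i * cnj (T$j$i)) * (complex_of_real (sqrt (b$i$j) / s i) * complex_of_real (sqrt (b$i$j)))"
          proof -
            have r: "R$i$j = cnj (T$j$i) * complex_of_real (sqrt (b$i$j) / s i)"
              unfolding R_def using False by (simp only: vec_lambda_beta if_False)
            have c: "C$i$j = complex_of_real (sqrt (b$i$j))" unfolding C_def by (simp only: vec_lambda_beta)
            show ?thesis unfolding r c by (simp only: mult.assoc mult.commute mult.left_commute)
          qed
          also have "\<dots> = (T$j$i * cnj (T$j$i)) * complex_of_real (b$i$j / s i)" by (simp only: e2)
          also have "(T$j$i * cnj (T$j$i)) * complex_of_real (b$i$j / s i) = complex_of_real ((cmod (T$j$i))^2 * b$i$j / s i)"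
            by (simp only: complex_norm_square[symmetric] of_real_mult[symmetric] times_divide_eq_right)
          finally show "R$i$j * C$i$j * T$j$i = complex_of_real ((cmod (T$j$i))^2 * b$i$j / s i)" .
        qed
        also have "\<dots> = complex_of_real ((s i)^2 / s i)"
          by (simp add: ss sum_divide_distrib)
        also have "\<dots> = complex_of_real (s i)" using False by (simp add: power2_eq_square)
        finally show ?thesis .
      qed
    qed
    then show ?thesis unfolding fb_def s_def by simp
  qed
  moreover have "fb T b \<ge> 0" unfolding fb_def by (intro sum_nonneg) (simp add: sn)
  ultimately show ?thesis by (intro exI[of _ R] exI[of _ C]) simp
qed

theorem mainTheorem4:
  fixes T :: "complex^'n^'n"
  shows "Sup {cmod (mtrace (schur R C ** T)) | R C :: complex^'n^'n.
                 row_norm R \<le> 1 \<and> col_norm C \<le> 1}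
         = Sup {(\<Sum>i\<in>UNIV. sqrt (\<Sum>j\<in>UNIV. (cmod (T$j$i))^2 * b$i$j)) | b :: real^'n^'n.
                 (\<forall>i j. b$i$j \<ge> 0) \<and> (\<forall>j. (\<Sum>i\<in>UNIV. b$i$j) \<le> 1)}
       \<and> Sup {cmod (mtrace (schur R C ** T)) | R C :: complex^'n^'n.
                 row_norm R \<le> 1 \<and> col_norm C \<le> 1}
         \<le> real CARD('n) * Max ((\<lambda>(i,j). cmod (T$i$j)) ` UNIV)"
proof -
  define S1 where "S1 = {cmod (mtrace (schur R C ** T)) | R C :: complex^'n^'n.
                 row_norm R \<le> 1 \<and> col_norm C \<le> 1}"
  define S2 where "S2 = {(\<Sum>i\<in>UNIV. sqrt (\<Sum>j\<in>UNIV. (cmod (T$j$i))^2 * b$i$j)) | b :: real^'n^'n.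
                 (\<forall>i j. b$i$j \<ge> 0) \<and> (\<forall>j. (\<Sum>i\<in>UNIV. b$i$j) \<le> 1)}"
  define K where "K = real CARD('n) * Max ((\<lambda>(i,j). cmod (T$i$j)) ` UNIV)"
  have S2b: "x \<le> K" if "x \<in> S2" for x
    using that lemC[of _ T] unfolding S2_def K_def fb_def by auto
  have S1S2: "\<exists>y\<in>S2. x \<le> y" if xS: "x \<in> S1" for x
  proof -
    obtain R C :: "complex^'n^'n" where RC: "row_norm R \<le> 1" "col_norm C \<le> 1"
      and x: "x = cmod (mtrace (schur R C ** T))" using xS unfolding S1_def by blast
    let ?b = "(\<chi> i j. (cmod (C$i$j))^2) :: real^'n^'n"
    have "fb T ?b \<in> S2" unfolding S2_def fb_def
      using RC(2) unfolding col_norm_le1 by (intro CollectI exI[of _ ?b]) auto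
    then show ?thesis using lemA[OF RC, of T] x by blast
  qed
  have S2S1: "\<exists>y\<in>S1. x \<le> y" if xS: "x \<in> S2" for x
  proof -
    obtain b :: "real^'n^'n" where b: "\<forall>i j. b$i$j \<ge> 0" "\<forall>j. (\<Sum>i\<in>UNIV. b$i$j) \<le> 1"
      and x: "x = fb T b" using xS unfolding S2_def fb_def by blast
    then show ?thesis using lemB[OF b, of T] unfolding S1_def by force
  qed
  have S1b: "x \<le> K" if "x \<in> S1" for x using S1S2[OF that] S2b by force
  have ne1: "S1 \<noteq> {}"
  proof -
    have "row_norm (0::complex^'n^'n) \<le> 1" "col_norm (0::complex^'n^'n) \<le> 1"
      unfolding row_norm_le1 col_norm_le1 by auto
    then show ?thesis unfolding S1_def by blast
  qed
  have ne2: "S2 \<noteq> {}"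
  proof -
    have "(\<forall>i j. (0::real^'n^'n)$i$j \<ge> 0) \<and> (\<forall>j. (\<Sum>i\<in>UNIV. (0::real^'n^'n)$i$j) \<le> 1)" by simp
    then show ?thesis unfolding S2_def by blast
  qed
  have bd1: "bdd_above S1" using S1b by (auto simp: bdd_above_def)
  have bd2: "bdd_above S2" using S2b by (auto simp: bdd_above_def)
  have "Sup S1 \<le> Sup S2" by (rule cSup_mono[OF ne1 bd2 S1S2])
  moreover have "Sup S2 \<le> Sup S1" by (rule cSup_mono[OF ne2 bd1 S2S1])
  moreover have "Sup S1 \<le> K" by (rule cSup_least[OF ne1 S1b])
  ultimately show ?thesis unfolding S1_def S2_def K_def by simp
qed

end
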